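(* Let $p$ be an odd prime. There is an isomorphism of $D_{2p}$-sets \[ \mathrm{Map}^{D_2}(D_{2p},\{a,b\})\cong *\amalg *\amalg\coprod_{i=1}^{2^{(p+1)/2}-2}D_{2p}/D_2\ \amalg\coprod_{i=1}^{\frac{2^{p-1}-1}{p}+1-2^{(p-1)/2}}D_{2p}.\]
   Context: $D_{2p}=\langle\tau,\zeta_p\mid\tau^2=\zeta_p^p=(\tau\zeta_p)^2=1\rangle$ is the dihedral group of order $2p$ and $D_2=\langle\tau\rangle$. $\{a,b\}$ is a two-element set with trivial $D_2$-action, and $\mathrm{Map}^{D_2}(D_{2p},\{a,b\})$ is the coinduced $D_{2p}$-set of $D_2$-equivariant maps $D_{2p}\to\{a,b\}$. *)

theory Defs
  imports "HOL-Computational_Algebra.Primes" "HOL-Library.FuncSet" "HOL-Algebra.Coset"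
begin

text \<open>Concrete dihedral group of order 2p: the pair (k, s) stands for
  zeta^k tau^(if s then 1 else 0), with 0 <= k < p. Multiplication:
  zeta^k tau^s zeta^l tau^t = zeta^(k + (-1)^s l) tau^(s+t).\<close>
definition dihedral :: "nat \<Rightarrow> (nat \<times> bool) monoid" where
  "dihedral p = \<lparr> carrier = {0..<p} \<times> (UNIV :: bool set),
     mult = (\<lambda>(k, s) (l, t). ((k + (if s then p - l else l)) mod p, s \<noteq> t)),
     one = (0, False) \<rparr>"

definition dih_tau :: "nat \<times> bool" where "dih_tau = (0, True)"
definition dih_zeta :: "nat \<times> bool" where "dih_zeta = (1, False)"

definition D2 :: "(nat \<times> bool) set" where "D2 = {(0, False), dih_tau}"

text \<open>Coinduced D_{2p}-set Map^{D_2}(D_{2p},{a,b}): D_2-equivariant maps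
  (D_2 acting on D_{2p} by left multiplication, trivially on {a,b}), i.e.
  f(tau g) = f(g); modelled as extensional functions on the carrier.\<close>
definition coind_set :: "nat \<Rightarrow> 'a \<Rightarrow> 'a \<Rightarrow> ((nat \<times> bool) \<Rightarrow> 'a) set" where
  "coind_set p a b = {f \<in> carrier (dihedral p) \<rightarrow>\<^sub>E {a, b}.
      \<forall>h \<in> D2. \<forall>g \<in> carrier (dihedral p). f (h \<otimes>\<^bsub>dihedral p\<^esub> g) = f g}"

definition coind_act :: "nat \<Rightarrow> (nat \<times> bool) \<Rightarrow> ((nat \<times> bool) \<Rightarrow> 'a) \<Rightarrow> ((nat \<times> bool) \<Rightarrow> 'a)" where
  "coind_act p h f = restrict (\<lambda>g. f (g \<otimes>\<^bsub>dihedral p\<^esub> h)) (carrier (dihedral p))"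

text \<open>Disjoint union  * + * + (N1 copies of D_{2p}/D_2) + (N2 copies of D_{2p}).\<close>
datatype 'g orbit_pt = Pt nat | Cos nat "'g set" | Free nat 'g

definition left_cosets_D2 :: "nat \<Rightarrow> (nat \<times> bool) set set" where
  "left_cosets_D2 p = {g <#\<^bsub>dihedral p\<^esub> D2 | g. g \<in> carrier (dihedral p)}"

definition coprod_set :: "nat \<Rightarrow> nat \<Rightarrow> nat \<Rightarrow> (nat \<times> bool) orbit_pt set" where
  "coprod_set p N1 N2 = {Pt 0, Pt 1}
     \<union> {Cos i C | i C. i < N1 \<and> C \<in> left_cosets_D2 p}
     \<union> {Free i g | i g. i < N2 \<and> g \<in> carrier (dihedral p)}"

fun coprod_act :: "nat \<Rightarrow> (nat \<times> bool) \<Rightarrow> (nat \<times> bool) orbit_pt \<Rightarrow> (nat \<times> bool) orbit_pt" where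
  "coprod_act p h (Pt i) = Pt i"
| "coprod_act p h (Cos i C) = Cos i (h <#\<^bsub>dihedral p\<^esub> C)"
| "coprod_act p h (Free i g) = Free i (h \<otimes>\<^bsub>dihedral p\<^esub> g)"

end

theory Submission
  imports Defs "HOL-Number_Theory.Cong"
begin


lemma dcarrier: "carrier (dihedral p) = {0..<p} \<times> UNIV"
  by (simp add: dihedral_def)

lemma dmult: "(k,s) \<otimes>\<^bsub>dihedral p\<^esub> (l,t) = ((k + (if s then p - l else l)) mod p, s \<noteq> t)"
  by (simp add: dihedral_def)

lemma done_: "\<one>\<^bsub>dihedral p\<^esub> = (0, False)"
  by (simp add: dihedral_def)

lemma mult_int:
  assumes "l \<le> p" "0 < p"
  shows "int ((k + (if s then p - l else l)) mod p) = (int k + (if s then - int l else int l)) mod int p"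
proof (cases s)
  case True
  have "int ((k + (p - l)) mod p) = ((int k - int l) + int p) mod int p"
    using assms by (simp add: of_nat_mod of_nat_diff algebra_simps)
  also have "\<dots> = (int k - int l) mod int p"
    by (rule mod_add_self2)
  finally show ?thesis using True by simp
qed (simp add: of_nat_mod)

lemma dgroup: assumes "0 < p" shows "group (dihedral p)"
proof (rule groupI)
  fix x y assume "x \<in> carrier (dihedral p)" "y \<in> carrier (dihedral p)"
  then show "x \<otimes>\<^bsub>dihedral p\<^esub> y \<in> carrier (dihedral p)" using assms
    by (cases x; cases y) (simp add: dcarrier dmult)
next
  show "\<one>\<^bsub>dihedral p\<^esub> \<in> carrier (dihedral p)" using assms by (simp add: dcarrier done_)
next
  fix x assume "x \<in> carrier (dihedral p)"
  then show "\<one>\<^bsub>dihedral p\<^esub> \<otimes>\<^bsub>dihedral p\<^esub> x = x"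
    by (cases x) (simp add: dcarrier dmult done_)
next
  fix x assume "x \<in> carrier (dihedral p)"
  then obtain k s where x: "x = (k,s)" "k < p" by (cases x) (auto simp: dcarrier)
  show "\<exists>y\<in>carrier (dihedral p). y \<otimes>\<^bsub>dihedral p\<^esub> x = \<one>\<^bsub>dihedral p\<^esub>"
  proof (cases s)
    case True
    then show ?thesis using x by (intro bexI[of _ "(k,True)"]) (auto simp: dcarrier dmult done_)
  next
    case False
    then show ?thesis using x assms
      by (intro bexI[of _ "((p - k) mod p,False)"]) (auto simp: dcarrier dmult done_ mod_add_left_eq)
  qed
next
  fix x y z assume "x \<in> carrier (dihedral p)" "y \<in> carrier (dihedral p)" "z \<in> carrier (dihedral p)"
  then obtain k s l t m u where xyz: "x = (k,s)" "y = (l,t)" "z = (m,u)" "k < p" "l < p" "m < p"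
    by (cases x; cases y; cases z) (auto simp: dcarrier)
  have l1: "((k + (if s then p - l else l)) mod p + (if s \<noteq> t then p - m else m)) mod p
      = (k + (if s then p - (l + (if t then p - m else m)) mod p else (l + (if t then p - m else m)) mod p)) mod p"
  proof -
    have "int (((k + (if s then p - l else l)) mod p + (if s \<noteq> t then p - m else m)) mod p)
       = (int ((k + (if s then p - l else l)) mod p) + (if s \<noteq> t then - int m else int m)) mod int p"
      using mult_int[of m p "(k + (if s then p - l else l)) mod p" "s \<noteq> t"] xyz assms by simp
    also have "\<dots> = ((int k + (if s then - int l else int l)) mod int p + (if s \<noteq> t then - int m else int m)) mod int p"
      using mult_int[of l p k s] xyz assms by simp
    also have "\<dots> = (int k + (if s then - int l else int l) + (if s \<noteq> t then - int m else int m)) mod int p"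
      by (simp add: mod_add_left_eq)
    also have "\<dots> = (int k + (if s then - ((int l + (if t then - int m else int m)) mod int p) else (int l + (if t then - int m else int m)) mod int p)) mod int p"
      by (cases s; cases t; simp add: mod_diff_right_eq mod_add_right_eq; simp add: algebra_simps)
    also have "\<dots> = (int k + (if s then - int ((l + (if t then p - m else m)) mod p) else int ((l + (if t then p - m else m)) mod p))) mod int p"
      using mult_int[of m p l t] xyz assms by simp
    also have "\<dots> = int ((k + (if s then p - (l + (if t then p - m else m)) mod p else (l + (if t then p - m else m)) mod p)) mod p)"
      using mult_int[of "(l + (if t then p - m else m)) mod p" p k s] xyz assms by simp
    finally show ?thesis by linarith
  qed
  show "x \<otimes>\<^bsub>dihedral p\<^esub> y \<otimes>\<^bsub>dihedral p\<^esub> z = x \<otimes>\<^bsub>dihedral p\<^esub> (y \<otimes>\<^bsub>dihedral p\<^esub> z)"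
    unfolding xyz dmult by (simp only: l1 prod.inject) blast 
qed



locale dihp =
  fixes p :: nat and a b :: 'a
  assumes pr: "prime p" and od: "odd p" and ab: "a \<noteq> b"
begin

lemma p_pos: "0 < p" using pr prime_gt_0_nat by blast
lemma p_ge3: "3 \<le> p"
proof -
  have "2 \<le> p" using pr prime_ge_2_nat by blast
  moreover have "p \<noteq> 2" using od by auto
  ultimately show ?thesis by simp
qed

sublocale grp: group "dihedral p" using p_pos by (rule dgroup)

abbreviation "M \<equiv> dihedral p"
abbreviation "G \<equiv> carrier (dihedral p)"
abbreviation "X \<equiv> coind_set p a b"
abbreviation "act \<equiv> coind_act p"
definition "cst c = restrict (\<lambda>_. c) G"

lemma one_eq: "\<one>\<^bsub>M\<^esub> = (0, False)" by (rule done_)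
lemma tau_in: "dih_tau \<in> G" using p_pos by (simp add: dcarrier dih_tau_def)
lemma D2_eq: "D2 = {\<one>\<^bsub>M\<^esub>, dih_tau}" by (simp add: D2_def one_eq)
lemma D2_sub: "D2 \<subseteq> G" using tau_in by (simp add: D2_eq)
lemma mult_tau_r: "g \<in> G \<Longrightarrow> g \<otimes>\<^bsub>M\<^esub> dih_tau = (fst g, \<not> snd g)"
  by (cases g) (auto simp: dcarrier dmult dih_tau_def)
lemma mult_tau_l: "g \<in> G \<Longrightarrow> dih_tau \<otimes>\<^bsub>M\<^esub> g = ((p - fst g) mod p, \<not> snd g)"
  by (cases g) (auto simp: dcarrier dmult dih_tau_def)
lemma tau_tau: "dih_tau \<otimes>\<^bsub>M\<^esub> dih_tau = \<one>\<^bsub>M\<^esub>"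
  by (simp add: dmult dih_tau_def one_eq)
lemma tau_ne_one: "dih_tau \<noteq> \<one>\<^bsub>M\<^esub>" by (simp add: dih_tau_def one_eq)

lemma act_apply: "g \<in> G \<Longrightarrow> act h f g = f (g \<otimes>\<^bsub>M\<^esub> h)"
  by (simp add: coind_act_def)
lemma act_out: "g \<notin> G \<Longrightarrow> act h f g = undefined"
  by (simp add: coind_act_def)

lemma X_D: assumes "f \<in> X"
  shows "f \<in> G \<rightarrow>\<^sub>E {a, b}" "\<And>d g. d \<in> D2 \<Longrightarrow> g \<in> G \<Longrightarrow> f (d \<otimes>\<^bsub>M\<^esub> g) = f g"
  using assms by (auto simp: coind_set_def)

lemma act_X: assumes "f \<in> X" "h \<in> G" shows "act h f \<in> X"
  unfolding coind_set_def
proof (intro CollectI conjI ballI)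
  show "act h f \<in> G \<rightarrow>\<^sub>E {a, b}" using X_D(1)[OF assms(1)] assms(2)
    by (auto simp: coind_act_def)
  fix d g assume d: "d \<in> D2" and g: "g \<in> G"
  have dG: "d \<in> G" using d D2_sub by auto
  show "act h f (d \<otimes>\<^bsub>M\<^esub> g) = act h f g"
    using d dG g assms X_D(2)[OF assms(1) d] by (simp add: act_apply grp.m_assoc)
qed

lemma act_one: assumes "f \<in> X" shows "act \<one>\<^bsub>M\<^esub> f = f"
proof
  fix g show "act \<one>\<^bsub>M\<^esub> f g = f g"
    using PiE_arb[OF X_D(1)[OF assms], of g] by (cases "g \<in> G") (auto simp: act_apply act_out)
qed

lemma act_mult: assumes "g \<in> G" "h \<in> G" shows "act h (act g f) = act (h \<otimes>\<^bsub>M\<^esub> g) f"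
proof
  fix x show "act h (act g f) x = act (h \<otimes>\<^bsub>M\<^esub> g) f x"
    using assms by (cases "x \<in> G") (auto simp: act_apply act_out grp.m_assoc)
qed

lemma act_inv: assumes "f \<in> X" "h \<in> G" shows "act (inv\<^bsub>M\<^esub> h) (act h f) = f"
  using assms by (simp add: act_mult act_one)

lemma cst_X: assumes "c \<in> {a, b}" shows "cst c \<in> X"
  unfolding coind_set_def
proof (intro CollectI conjI ballI)
  show "cst c \<in> G \<rightarrow>\<^sub>E {a, b}" using assms unfolding cst_def restrict_PiE_iff by blast
  fix d g assume "d \<in> D2" "g \<in> G"
  then have "d \<otimes>\<^bsub>M\<^esub> g \<in> G" using D2_sub grp.m_closed by blast
  then show "cst c (d \<otimes>\<^bsub>M\<^esub> g) = cst c g" using \<open>g \<in> G\<close> unfolding cst_def by simp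
qed

lemma act_cst: "h \<in> G \<Longrightarrow> act h (cst c) = cst c"
  by (auto simp: coind_act_def cst_def)

lemma X_tau: assumes "f \<in> X" "k < p" shows "f (k, True) = f ((p - k) mod p, False)"
proof -
  have m: "dih_tau \<otimes>\<^bsub>M\<^esub> (k,True) = ((p-k) mod p, False)" by (simp add: dmult dih_tau_def)
  have "f (dih_tau \<otimes>\<^bsub>M\<^esub> (k, True)) = f (k, True)"
    by (rule X_D(2)[OF assms(1)]) (auto simp: D2_def dcarrier assms)
  then show ?thesis unfolding m by simp
qed

lemma const_char: assumes "f \<in> X" "\<And>k. k < p \<Longrightarrow> f (k, False) = f (0, False)"
  shows "f = cst a \<or> f = cst b"
proof -
  have fx: "f (0, False) \<in> {a, b}" using X_D(1)[OF assms(1)] p_pos by (auto simp: dcarrier)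
  have "f = cst (f (0, False))"
  proof
    fix g show "f g = cst (f (0, False)) g"
    proof (cases "g \<in> G")
      case True
      then obtain k s where g: "g = (k, s)" "k < p" by (cases g) (auto simp: dcarrier)
      have cg: "cst (f (0, False)) g = f (0, False)" using True by (simp add: cst_def)
      show ?thesis
      proof (cases s)
        case True
        have "f g = f ((p - k) mod p, False)" using g True X_tau[OF assms(1), of k] by simp
        also have "\<dots> = f (0, False)" using assms(2)[of "(p - k) mod p"] p_pos by simp
        finally show ?thesis using cg by simp
      next
        case False then show ?thesis using g assms(2)[of k] cg by simp
      qed
    next
      case False then show ?thesis using PiE_arb[OF X_D(1)[OF assms(1)] False] by (simp add: cst_def)
    qed
  qed
  then show ?thesis using fx by auto
qed

lemma rot_const: assumes "f \<in> X" "0 < m" "m < p" "act (m, False) f = f"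
  shows "f = cst a \<or> f = cst b"
proof (rule const_char[OF assms(1)])
  have step: "f ((k + m) mod p, False) = f (k, False)" if "k < p" for k
  proof -
    have "act (m, False) f (k, False) = f ((k, False) \<otimes>\<^bsub>M\<^esub> (m, False))"
      by (rule act_apply) (simp add: dcarrier that)
    then have "f ((k, False) \<otimes>\<^bsub>M\<^esub> (m, False)) = f (k, False)" using assms(4) by simp
    then show ?thesis by (simp add: dmult)
  qed
  have iter: "f ((j * m) mod p, False) = f (0, False)" for j
  proof (induction j)
    case (Suc j)
    have "(Suc j * m) mod p = ((j * m) mod p + m) mod p" by (metis mod_add_left_eq mult_Suc add.commute)
    then have "f ((Suc j * m) mod p, False) = f (((j * m) mod p + m) mod p, False)"
      by simp
    also have "\<dots> = f ((j * m) mod p, False)" using step p_pos by simp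
    finally show ?case using Suc by simp
  qed simp
  fix k assume k: "k < p"
  have "coprime m p" using assms pr
    by (metis coprime_commute nat_dvd_not_less prime_imp_coprime_nat)
  then have "gcd m p = 1" by simp
  then obtain x where x: "[m * x = 1] (mod p)" using cong_solve_nat[of m p] by auto
  then have "[m * x * k = 1 * k] (mod p)" by (rule cong_scalar_right)
  then have "(x * k * m) mod p = k mod p" by (simp add: cong_def mult.commute mult.left_commute)
  then show "f (k, False) = f (0, False)" using iter[of "x * k"] k by simp
qed

end

context dihp begin

definition "S = {s \<in> X. act dih_tau s = s \<and> s \<noteq> cst a \<and> s \<noteq> cst b}"

lemma act_cst_back: assumes "f \<in> X" "h \<in> G" "act h f = cst c" shows "f = cst c"
proof -
  have "f = act (inv\<^bsub>M\<^esub> h) (act h f)" using act_inv[OF assms(1,2)] by simp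
  also have "\<dots> = cst c" using assms act_cst[OF grp.inv_closed[OF assms(2)]] by simp
  finally show ?thesis .
qed

lemma G_elem: "g \<in> G \<Longrightarrow> \<exists>k s. g = (k, s) \<and> k < p"
  by (cases g) (auto simp: dcarrier)

lemma stab_S: assumes "s \<in> S" "h \<in> G" "act h s = s" shows "h \<in> D2"
proof -
  have sX: "s \<in> X" and st: "act dih_tau s = s" and nc: "s \<noteq> cst a" "s \<noteq> cst b"
    using assms(1) by (auto simp: S_def)
  obtain m t where h: "h = (m, t)" "m < p" using G_elem[OF assms(2)] by blast
  show ?thesis
  proof (cases t)
    case False
    show ?thesis
    proof (cases "m = 0")
      case True then show ?thesis using h False by (simp add: D2_def)
    next
      case m: False
      then show ?thesis using rot_const[OF sX, of m] h False assms(3) nc by auto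
    qed
  next
    case True
    have "act (h \<otimes>\<^bsub>M\<^esub> dih_tau) s = s" using assms st tau_in act_mult[of dih_tau h s] by simp
    moreover have "h \<otimes>\<^bsub>M\<^esub> dih_tau = (m, False)" using mult_tau_r[OF assms(2)] h True by simp
    ultimately have "act (m, False) s = s" by simp
    then have "m = 0" using rot_const[OF sX, of m] h nc by auto
    then show ?thesis using h True by (simp add: D2_def dih_tau_def)
  qed
qed

lemma D2_fix_S: assumes "s \<in> S" "d \<in> D2" shows "act d s = s"
  using assms act_one[of s] by (auto simp: S_def D2_eq)

lemma half_cong: assumes "c = (((p - 1) div 2) * m) mod p"
  shows "(p - c) mod p = (c + m) mod p"
proof -
  define q where "q = (p - 1) div 2"
  have pn: "p = 2 * q + 1" using od p_pos unfolding q_def by presburger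
  then have pq: "int p = 2 * int q + 1" by simp
  have cp: "c < p" using assms p_pos by simp
  define d where "d = int ((q * m) div p)"
  have "q * m = p * ((q * m) div p) + c" unfolding assms q_def[symmetric] by simp
  then have "int (q * m) = int p * d + int c" unfolding d_def by (metis of_nat_add of_nat_mult)
  then have ci: "int c = int q * int m - int p * d" by simp
  have dv: "int p dvd (int c + int m) - (int p - int c)"
  proof -
    have "(int c + int m) - (int p - int c) = int p * (int m - 2 * d - 1)"
      using ci pq by (simp add: algebra_simps)
    then show ?thesis by simp
  qed
  have "(int c + int m) mod int p = (int p - int c) mod int p"
    using dv mod_eq_dvd_iff by blast
  then have "int ((c + m) mod p) = int ((p - c) mod p)"
    using cp by (simp add: of_nat_mod of_nat_diff)
  then show ?thesis by simp
qed

lemma stab_free: assumes "f \<in> X" "f \<noteq> cst a" "f \<noteq> cst b" "\<forall>g\<in>G. act g f \<notin> S"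
  "h \<in> G" "act h f = f" shows "h = \<one>\<^bsub>M\<^esub>"
proof -
  obtain m t where h: "h = (m, t)" "m < p" using G_elem[OF assms(5)] by blast
  show ?thesis
  proof (cases t)
    case False
    have "m = 0" using rot_const[OF assms(1), of m] h False assms by auto
    then show ?thesis using h False by (simp add: one_eq)
  next
    case True
    define c where "c = (((p - 1) div 2) * m) mod p"
    have cp: "c < p" using p_pos by (simp add: c_def)
    define g where "g = (c, False)"
    have gG: "g \<in> G" using cp by (simp add: g_def dcarrier)
    have comm: "dih_tau \<otimes>\<^bsub>M\<^esub> g = g \<otimes>\<^bsub>M\<^esub> h"
      using half_cong[OF c_def] h True by (simp add: g_def dih_tau_def dmult)
    have "act dih_tau (act g f) = act g f"
      using act_mult[OF gG tau_in, of f] act_mult[OF assms(5) gG, of f] comm assms(6) by simp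
    moreover have "act g f \<in> X" using act_X assms(1) gG by blast
    moreover have "act g f \<noteq> cst a" "act g f \<noteq> cst b"
      using act_cst_back[OF assms(1) gG] assms(2,3) by auto
    ultimately have "act g f \<in> S" by (simp add: S_def)
    then show ?thesis using assms(4) gG by blast
  qed
qed

lemma S_unique: assumes "s \<in> S" "s' \<in> S" "g \<in> G" "act g s = s'" shows "g \<in> D2"
proof -
  have sX: "s \<in> X" and s'X: "s' \<in> X" and st: "act dih_tau s' = s'"
    using assms by (auto simp: S_def)
  define k where "k = inv\<^bsub>M\<^esub> g \<otimes>\<^bsub>M\<^esub> (dih_tau \<otimes>\<^bsub>M\<^esub> g)"
  have kG: "k \<in> G" using assms(3) tau_in by (simp add: k_def)
  have "act k s = act (inv\<^bsub>M\<^esub> g) (act dih_tau (act g s))"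
    using assms(3) tau_in by (simp add: k_def act_mult)
  also have "\<dots> = s" using st assms act_inv[OF sX assms(3)] by simp
  finally have "k \<in> D2" using stab_S[OF assms(1) kG] by simp
  moreover have "k \<noteq> \<one>\<^bsub>M\<^esub>"
  proof
    assume "k = \<one>\<^bsub>M\<^esub>"
    then have e: "inv\<^bsub>M\<^esub> g \<otimes>\<^bsub>M\<^esub> (dih_tau \<otimes>\<^bsub>M\<^esub> g) = \<one>\<^bsub>M\<^esub>" by (simp only: k_def)
    have "dih_tau \<otimes>\<^bsub>M\<^esub> g = g \<otimes>\<^bsub>M\<^esub> \<one>\<^bsub>M\<^esub>"
      using grp.inv_solve_left'[OF grp.one_closed assms(3) grp.m_closed[OF tau_in assms(3)]] e by blast
    then show False using assms(3) tau_in tau_ne_one by simp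
  qed
  ultimately have "k = dih_tau" by (simp add: D2_eq)
  then have e: "inv\<^bsub>M\<^esub> g \<otimes>\<^bsub>M\<^esub> (dih_tau \<otimes>\<^bsub>M\<^esub> g) = dih_tau" by (simp only: k_def)
  have comm: "dih_tau \<otimes>\<^bsub>M\<^esub> g = g \<otimes>\<^bsub>M\<^esub> dih_tau"
    using grp.inv_solve_left'[OF tau_in assms(3) grp.m_closed[OF tau_in assms(3)]] e by blast
  obtain k0 t where g: "g = (k0, t)" "k0 < p" using G_elem[OF assms(3)] by blast
  have "(p - k0) mod p = k0" using comm mult_tau_l[OF assms(3)] mult_tau_r[OF assms(3)] g by simp
  then have "k0 = 0"
  proof (cases "k0 = 0")
    case False
    then have "p - k0 = k0" using \<open>(p - k0) mod p = k0\<close> g(2) by simp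
    then have "p = 2 * k0" using g(2) by simp
    then show ?thesis using od by simp
  qed
  then show ?thesis using g by (cases t) (auto simp: D2_def dih_tau_def)
qed

end

context dihp begin

abbreviation "L \<equiv> left_cosets_D2 p"

lemma lcos_eq: assumes "g \<in> G" shows "g <#\<^bsub>M\<^esub> D2 = {g, g \<otimes>\<^bsub>M\<^esub> dih_tau}"
  using assms by (auto simp: l_coset_def D2_eq)

lemma coset_in_L: "g \<in> G \<Longrightarrow> g <#\<^bsub>M\<^esub> D2 \<in> L"
  unfolding left_cosets_D2_def by blast

lemma coset_of_mem: assumes "C \<in> L" "g \<in> C" shows "C = g <#\<^bsub>M\<^esub> D2"
proof -
  obtain g0 where g0: "g0 \<in> G" "C = g0 <#\<^bsub>M\<^esub> D2" using assms(1) by (auto simp: left_cosets_D2_def)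
  then have C: "C = {g0, g0 \<otimes>\<^bsub>M\<^esub> dih_tau}" using lcos_eq by simp
  show ?thesis
  proof (cases "g = g0")
    case True then show ?thesis using g0 by simp
  next
    case False
    then have g: "g = g0 \<otimes>\<^bsub>M\<^esub> dih_tau" using assms(2) C by simp
    have gG: "g \<in> G" using g g0 tau_in by simp
    have "g \<otimes>\<^bsub>M\<^esub> dih_tau = g0" using g g0(1) tau_in by (simp add: grp.m_assoc tau_tau)
    then show ?thesis using lcos_eq[OF gG] C g by auto
  qed
qed

lemma L_sub: "C \<in> L \<Longrightarrow> C \<subseteq> G"
  using tau_in by (auto simp: left_cosets_D2_def lcos_eq)

lemma L_ne: assumes "C \<in> L" shows "\<exists>g. g \<in> C"
proof -
  obtain g0 where g0: "g0 \<in> G" "C = g0 <#\<^bsub>M\<^esub> D2" using assms by (auto simp: left_cosets_D2_def)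
  then show ?thesis using lcos_eq[OF g0(1)] by blast
qed

lemma act_coset_const: assumes "s \<in> S" "C \<in> L" "g \<in> C" "g' \<in> C" shows "act g s = act g' s"
proof -
  obtain g0 where g0: "g0 \<in> G" "C = g0 <#\<^bsub>M\<^esub> D2" using assms(2) by (auto simp: left_cosets_D2_def)
  have "act x s = act g0 s" if "x \<in> C" for x
  proof -
    have "x = g0 \<or> x = g0 \<otimes>\<^bsub>M\<^esub> dih_tau" using that g0 lcos_eq by auto
    moreover have "act (g0 \<otimes>\<^bsub>M\<^esub> dih_tau) s = act g0 s"
      using act_mult[OF tau_in g0(1), of s] assms(1) by (simp add: S_def)
    ultimately show ?thesis by auto
  qed
  then show ?thesis using assms by metis
qed

lemma act_coset_inj: assumes "s \<in> S" "g \<in> G" "g' \<in> G" "act g s = act g' s"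
  shows "g <#\<^bsub>M\<^esub> D2 = g' <#\<^bsub>M\<^esub> D2"
proof -
  have sX: "s \<in> X" using assms(1) by (simp add: S_def)
  have dG: "inv\<^bsub>M\<^esub> g \<otimes>\<^bsub>M\<^esub> g' \<in> G" using assms by simp
  have "act (inv\<^bsub>M\<^esub> g \<otimes>\<^bsub>M\<^esub> g') s = act (inv\<^bsub>M\<^esub> g) (act g' s)"
    using act_mult[OF assms(3) grp.inv_closed[OF assms(2)], of s] by simp
  also have "\<dots> = s" using assms(4) act_inv[OF sX assms(2)] by simp
  finally have d: "inv\<^bsub>M\<^esub> g \<otimes>\<^bsub>M\<^esub> g' \<in> D2" using stab_S[OF assms(1) dG] by simp
  have "g' = g \<otimes>\<^bsub>M\<^esub> (inv\<^bsub>M\<^esub> g \<otimes>\<^bsub>M\<^esub> g')"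
    using assms(2,3) by (simp add: grp.m_assoc[symmetric])
  then have "g' \<in> g <#\<^bsub>M\<^esub> D2" using d by (auto simp: l_coset_def)
  then show ?thesis using coset_of_mem[OF coset_in_L[OF assms(2)]] by simp
qed

lemma lcos_act: "h \<in> G \<Longrightarrow> g \<in> G \<Longrightarrow> h <#\<^bsub>M\<^esub> (g <#\<^bsub>M\<^esub> D2) = (h \<otimes>\<^bsub>M\<^esub> g) <#\<^bsub>M\<^esub> D2"
  using grp.lcos_m_assoc[OF D2_sub] by simp

definition "orb f = (\<lambda>g. act g f) ` G"
definition "rep f = (SOME y. y \<in> orb f)"
definition "XF = {f \<in> X. f \<noteq> cst a \<and> f \<noteq> cst b \<and> (\<forall>g\<in>G. act g f \<notin> S)}"
definition "RF = {f \<in> XF. rep f = f}"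

lemma orb_act: assumes "f \<in> X" "h \<in> G" shows "orb (act h f) = orb f"
proof
  show "orb (act h f) \<subseteq> orb f" using assms by (auto simp: orb_def act_mult)
  show "orb f \<subseteq> orb (act h f)"
  proof
    fix y assume "y \<in> orb f"
    then obtain g where g: "g \<in> G" "y = act g f" by (auto simp: orb_def)
    have "y = act (g \<otimes>\<^bsub>M\<^esub> inv\<^bsub>M\<^esub> h) (act h f)"
      using g assms by (simp add: act_mult grp.m_assoc act_one)
    then show "y \<in> orb (act h f)" using g assms by (auto simp: orb_def)
  qed
qed

lemma self_orb: "f \<in> X \<Longrightarrow> f \<in> orb f"
  using act_one[of f] unfolding orb_def by (metis grp.one_closed image_eqI)

lemma rep_orb: "f \<in> X \<Longrightarrow> rep f \<in> orb f"
  unfolding rep_def using self_orb by (metis someI)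

lemma XF_act: assumes "f \<in> XF" "h \<in> G" shows "act h f \<in> XF"
proof -
  have fX: "f \<in> X" using assms by (simp add: XF_def)
  have "act h f \<noteq> cst a" "act h f \<noteq> cst b" using act_cst_back[OF fX assms(2)] assms(1) by (auto simp: XF_def)
  moreover have "\<forall>g\<in>G. act g (act h f) \<notin> S" using assms by (auto simp: XF_def act_mult)
  ultimately show ?thesis using act_X[OF fX assms(2)] by (simp add: XF_def)
qed

lemma rep_RF: assumes "f \<in> XF" shows "rep f \<in> RF"
proof -
  have fX: "f \<in> X" using assms by (simp add: XF_def)
  obtain g where g: "g \<in> G" "rep f = act g f" using rep_orb[OF fX] by (auto simp: orb_def)
  have "rep (rep f) = rep f" using orb_act[OF fX g(1)] g by (simp add: rep_def)
  then show ?thesis using XF_act[OF assms g(1)] g by (simp add: RF_def)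
qed

end


locale dihp2 = dihp p a b for p :: nat and a b :: 'a +
  fixes sS rF :: "nat \<Rightarrow> (nat \<times> bool \<Rightarrow> 'a)" and N1 N2 :: nat
  assumes bS: "bij_betw sS {0..<N1} S" and bF: "bij_betw rF {0..<N2} RF"
begin

abbreviation "Y \<equiv> coprod_set p N1 N2"

definition "Phi y = (case y of Pt n \<Rightarrow> if n = 0 then cst a else cst b
   | Cos i C \<Rightarrow> act (SOME g. g \<in> C) (sS i) | Free i g \<Rightarrow> act g (rF i))"

lemma sS_in: "i < N1 \<Longrightarrow> sS i \<in> S" using bS by (auto simp: bij_betw_def)
lemma rF_in: "i < N2 \<Longrightarrow> rF i \<in> RF" using bF by (auto simp: bij_betw_def)

lemma Phi_Cos: assumes "i < N1" "C \<in> L" "g \<in> C" shows "Phi (Cos i C) = act g (sS i)"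
proof -
  have "(SOME g. g \<in> C) \<in> C" using L_ne[OF assms(2)] by (metis someI)
  then have "act (SOME g. g \<in> C) (sS i) = act g (sS i)"
    using act_coset_const[OF sS_in[OF assms(1)] assms(2) _ assms(3)] by blast
  then show ?thesis by (simp add: Phi_def)
qed

lemma Y_cases: assumes "y \<in> Y"
  obtains "y = Pt 0" | "y = Pt 1" | i C where "y = Cos i C" "i < N1" "C \<in> L"
   | i g where "y = Free i g" "i < N2" "g \<in> G"
  using assms by (auto simp: coprod_set_def)

lemma cst_ne: "cst a \<noteq> cst b"
proof
  assume "cst a = cst b"
  then have "cst a \<one>\<^bsub>M\<^esub> = cst b \<one>\<^bsub>M\<^esub>" by simp
  then show False using ab by (simp add: cst_def)
qed

lemma S_X: "s \<in> S \<Longrightarrow> s \<in> X" by (simp add: S_def)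
lemma RF_X: "r \<in> RF \<Longrightarrow> r \<in> X" by (simp add: RF_def XF_def)

lemma Phi_X: assumes "y \<in> Y" shows "Phi y \<in> X"
  using assms
proof (cases rule: Y_cases)
  case 1 then show ?thesis using cst_X by (simp add: Phi_def)
next
  case 2 then show ?thesis using cst_X by (simp add: Phi_def)
next
  case (3 i C)
  then obtain g where g: "g \<in> C" using L_ne by blast
  have gG: "g \<in> G" using g L_sub 3 by blast
  show ?thesis using Phi_Cos[OF 3(2,3) g] act_X[OF S_X[OF sS_in[OF 3(2)]] gG] 3 by simp
next
  case (4 i g)
  then show ?thesis using act_X[OF RF_X[OF rF_in[OF 4(2)]] 4(3)] by (simp add: Phi_def)
qed

lemma Phi_nc_Cos: assumes "i < N1" "C \<in> L" shows "Phi (Cos i C) \<noteq> cst a" "Phi (Cos i C) \<noteq> cst b"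
proof -
  obtain g where g: "g \<in> C" using L_ne assms by blast
  have gG: "g \<in> G" using g L_sub assms by blast
  have s: "sS i \<in> S" using sS_in assms by simp
  show "Phi (Cos i C) \<noteq> cst a" "Phi (Cos i C) \<noteq> cst b"
    using Phi_Cos[OF assms g] act_cst_back[OF S_X[OF s] gG] s by (auto simp: S_def)
qed

lemma Phi_nc_Free: assumes "i < N2" "g \<in> G" shows "Phi (Free i g) \<noteq> cst a" "Phi (Free i g) \<noteq> cst b"
proof -
  have r: "rF i \<in> RF" using rF_in assms by simp
  show "Phi (Free i g) \<noteq> cst a" "Phi (Free i g) \<noteq> cst b"
    using act_cst_back[OF RF_X[OF r] assms(2)] r by (auto simp: Phi_def RF_def XF_def)
qed

lemma Cos_ne_Free: assumes "i < N1" "C \<in> L" "j < N2" "g' \<in> G"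
  shows "Phi (Cos i C) \<noteq> Phi (Free j g')"
proof
  assume eq: "Phi (Cos i C) = Phi (Free j g')"
  obtain g where g: "g \<in> C" using L_ne assms by blast
  have gG: "g \<in> G" using g L_sub assms by blast
  have s: "sS i \<in> S" and r: "rF j \<in> RF" using sS_in rF_in assms by auto
  have "act g (sS i) = act g' (rF j)" using eq Phi_Cos[OF assms(1,2) g] by (simp add: Phi_def)
  then have "act (inv\<^bsub>M\<^esub> g \<otimes>\<^bsub>M\<^esub> g') (rF j) = sS i"
    using act_mult[OF assms(4) grp.inv_closed[OF gG], of "rF j"] act_inv[OF S_X[OF s] gG] by simp
  moreover have "inv\<^bsub>M\<^esub> g \<otimes>\<^bsub>M\<^esub> g' \<in> G" using gG assms(4) by simp
  ultimately show False using r s by (auto simp: RF_def XF_def)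
qed

lemma Cos_inj: assumes "i < N1" "C \<in> L" "j < N1" "C' \<in> L" "Phi (Cos i C) = Phi (Cos j C')"
  shows "i = j \<and> C = C'"
proof -
  obtain g where g: "g \<in> C" using L_ne assms by blast
  have gG: "g \<in> G" using g L_sub assms by blast
  obtain g' where g': "g' \<in> C'" using L_ne assms by blast
  have g'G: "g' \<in> G" using g' L_sub assms by blast
  have s: "sS i \<in> S" and s': "sS j \<in> S" using sS_in assms by auto
  have eq: "act g (sS i) = act g' (sS j)" using assms(5) Phi_Cos[OF assms(1,2) g] Phi_Cos[OF assms(3,4) g'] by simp
  then have "act (inv\<^bsub>M\<^esub> g' \<otimes>\<^bsub>M\<^esub> g) (sS i) = sS j"
    using act_mult[OF gG grp.inv_closed[OF g'G], of "sS i"] act_inv[OF S_X[OF s'] g'G] by simp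
  moreover have "inv\<^bsub>M\<^esub> g' \<otimes>\<^bsub>M\<^esub> g \<in> G" using gG g'G by simp
  ultimately have "sS j = sS i" using S_unique[OF s s'] D2_fix_S[OF s] by metis
  then have ij: "i = j" using bS assms(1,3) by (auto simp: bij_betw_def inj_on_def)
  have "g <#\<^bsub>M\<^esub> D2 = g' <#\<^bsub>M\<^esub> D2" using act_coset_inj[OF s gG g'G] eq ij by simp
  then have "C = C'" using coset_of_mem[OF assms(2) g] coset_of_mem[OF assms(4) g'] by simp
  then show ?thesis using ij by simp
qed

lemma Free_inj: assumes "i < N2" "g \<in> G" "j < N2" "g' \<in> G" "Phi (Free i g) = Phi (Free j g')"
  shows "i = j \<and> g = g'"
proof -
  have r: "rF i \<in> RF" and r': "rF j \<in> RF" using rF_in assms by auto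
  have eq: "act g (rF i) = act g' (rF j)" using assms(5) by (simp add: Phi_def)
  have hG: "inv\<^bsub>M\<^esub> g' \<otimes>\<^bsub>M\<^esub> g \<in> G" using assms by simp
  have e2: "act (inv\<^bsub>M\<^esub> g' \<otimes>\<^bsub>M\<^esub> g) (rF i) = rF j"
    using eq act_mult[OF assms(2) grp.inv_closed[OF assms(4)], of "rF i"] act_inv[OF RF_X[OF r'] assms(4)] by simp
  then have "orb (rF j) = orb (rF i)" using orb_act[OF RF_X[OF r] hG] by simp
  then have "rF j = rF i" using r r' by (simp add: RF_def rep_def)
  then have ij: "i = j" using bF assms(1,3) by (auto simp: bij_betw_def inj_on_def)
  have "inv\<^bsub>M\<^esub> g' \<otimes>\<^bsub>M\<^esub> g = \<one>\<^bsub>M\<^esub>"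
    using stab_free[OF RF_X[OF r] _ _ _ hG] e2 \<open>rF j = rF i\<close> r by (auto simp: RF_def XF_def)
  then have "g = g'" using assms(2,4) grp.inv_solve_left'[OF grp.one_closed assms(4,2)] by simp
  then show ?thesis using ij by simp
qed

lemma Phi_Pt0: "Phi (Pt 0) = cst a" by (simp add: Phi_def)
lemma Phi_Pt1: "Phi (Pt 1) = cst b" by (simp add: Phi_def)

lemma Phi_inj: "inj_on Phi Y"
proof (rule inj_onI)
  fix y1 y2 assume y1: "y1 \<in> Y" and y2: "y2 \<in> Y" and eq: "Phi y1 = Phi y2"
  show "y1 = y2"
    using y1
  proof (cases rule: Y_cases)
    case 1
    from y2 show ?thesis
    proof (cases rule: Y_cases)
      case 2 then show ?thesis using 1 eq cst_ne Phi_Pt0 Phi_Pt1 by simp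
    next
      case (3 j C') then show ?thesis using 1 eq Phi_nc_Cos(1)[of j C'] Phi_Pt0 by simp
    next
      case (4 j g') then show ?thesis using 1 eq Phi_nc_Free(1)[of j g'] Phi_Pt0 by simp
    qed (use 1 in simp)
  next
    case 2
    from y2 show ?thesis
    proof (cases rule: Y_cases)
      case 1 then show ?thesis using 2 eq cst_ne Phi_Pt0 Phi_Pt1 by simp
    next
      case (3 j C') then show ?thesis using 2 eq Phi_nc_Cos(2)[of j C'] Phi_Pt1 by simp
    next
      case (4 j g') then show ?thesis using 2 eq Phi_nc_Free(2)[of j g'] Phi_Pt1 by simp
    qed (use 2 in simp)
  next
    case (3 i C)
    from y2 show ?thesis
    proof (cases rule: Y_cases)
      case 1 then show ?thesis using 3 eq Phi_nc_Cos(1)[of i C] Phi_Pt0 by simp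
    next
      case 2 then show ?thesis using 3 eq Phi_nc_Cos(2)[of i C] Phi_Pt1 by simp
    next
      case (3 j C') then show ?thesis using \<open>y1 = Cos i C\<close> \<open>i < N1\<close> \<open>C \<in> L\<close> eq Cos_inj by auto
    next
      case (4 j g') then show ?thesis using \<open>y1 = Cos i C\<close> \<open>i < N1\<close> \<open>C \<in> L\<close> eq Cos_ne_Free by auto
    qed
  next
    case (4 i g)
    from y2 show ?thesis
    proof (cases rule: Y_cases)
      case 1 then show ?thesis using 4 eq Phi_nc_Free(1)[of i g] Phi_Pt0 by simp
    next
      case 2 then show ?thesis using 4 eq Phi_nc_Free(2)[of i g] Phi_Pt1 by simp
    next
      case (3 j C') then show ?thesis using \<open>y1 = Free i g\<close> \<open>i < N2\<close> \<open>g \<in> G\<close> eq Cos_ne_Free by metis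
    next
      case (4 j g') then show ?thesis using \<open>y1 = Free i g\<close> \<open>i < N2\<close> \<open>g \<in> G\<close> eq Free_inj by auto
    qed
  qed
qed

lemma Phi_surj: assumes "f \<in> X" shows "\<exists>y\<in>Y. Phi y = f"
proof -
  have "f = cst a \<or> f = cst b \<or> (\<exists>g\<in>G. act g f \<in> S) \<or> f \<in> XF"
    using assms unfolding XF_def by blast
  then consider "f = cst a" | "f = cst b" | g where "g \<in> G" "act g f \<in> S" | "f \<in> XF"
    by blast
  then show ?thesis
  proof cases
    case 1 then show ?thesis by (intro bexI[of _ "Pt 0"]) (auto simp: Phi_def coprod_set_def)
  next
    case 2 then show ?thesis using cst_ne by (intro bexI[of _ "Pt 1"]) (auto simp: Phi_def coprod_set_def)
  next
    case (3 g)
    obtain i where i0: "i \<in> {0..<N1}" "sS i = act g f" using bS 3(2) unfolding bij_betw_def by (metis imageE)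
    then have i: "i < N1" "sS i = act g f" by auto
    have igG: "inv\<^bsub>M\<^esub> g \<in> G" using 3 by simp
    define C where "C = inv\<^bsub>M\<^esub> g <#\<^bsub>M\<^esub> D2"
    have CL: "C \<in> L" using coset_in_L[OF igG] by (simp add: C_def)
    have "inv\<^bsub>M\<^esub> g \<in> C" using lcos_eq[OF igG] by (simp add: C_def)
    then have "Phi (Cos i C) = act (inv\<^bsub>M\<^esub> g) (act g f)" using Phi_Cos[OF i(1) CL] i by simp
    also have "\<dots> = f" using act_inv[OF assms 3(1)] .
    finally show ?thesis using i CL by (intro bexI[of _ "Cos i C"]) (auto simp: coprod_set_def)
  next
    case 4
    have r: "rep f \<in> RF" using rep_RF[OF 4] .
    obtain g where g: "g \<in> G" "rep f = act g f" using rep_orb[OF assms] by (auto simp: orb_def)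
    obtain i where i0: "i \<in> {0..<N2}" "rF i = rep f" using bF r unfolding bij_betw_def by (metis imageE)
    then have i: "i < N2" "rF i = rep f" by auto
    have igG: "inv\<^bsub>M\<^esub> g \<in> G" using g by simp
    have "Phi (Free i (inv\<^bsub>M\<^esub> g)) = f" using i g act_inv[OF assms g(1)] by (simp add: Phi_def)
    moreover have "Free i (inv\<^bsub>M\<^esub> g) \<in> Y" using i igG unfolding coprod_set_def by blast
    ultimately show ?thesis by blast
  qed
qed

lemma Phi_bij: "bij_betw Phi Y X"
  unfolding bij_betw_def using Phi_inj Phi_X Phi_surj by blast

lemma coprod_act_Y: assumes "y \<in> Y" "h \<in> G" shows "coprod_act p h y \<in> Y"
  using assms(1)
proof (cases rule: Y_cases)
  case (3 i C)
  obtain g where g: "g \<in> G" "C = g <#\<^bsub>M\<^esub> D2" using 3 by (auto simp: left_cosets_D2_def)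
  have "h <#\<^bsub>M\<^esub> C \<in> L" using lcos_act[OF assms(2) g(1)] g coset_in_L assms(2) by simp
  then show ?thesis using 3 by (auto simp: coprod_set_def)
next
  case (4 i g)
  have hg: "h \<otimes>\<^bsub>M\<^esub> g \<in> G" using assms(2) 4 by simp
  have "coprod_act p h y = Free i (h \<otimes>\<^bsub>M\<^esub> g)" using 4 by simp
  then show ?thesis using hg 4(2) unfolding coprod_set_def by blast
qed (auto simp: coprod_set_def)

lemma Phi_equiv: assumes "y \<in> Y" "h \<in> G" shows "Phi (coprod_act p h y) = act h (Phi y)"
  using assms(1)
proof (cases rule: Y_cases)
  case 1 then show ?thesis using act_cst[OF assms(2), of a] by (simp add: Phi_def)
next
  case 2 then show ?thesis using act_cst[OF assms(2), of b] by (simp add: Phi_def)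
next
  case (3 i C)
  obtain g where g: "g \<in> C" using L_ne 3 by blast
  have gG: "g \<in> G" using g L_sub 3 by blast
  have hC: "h <#\<^bsub>M\<^esub> C \<in> L" using coprod_act_Y[OF assms] 3 by (auto simp: coprod_set_def)
  have "h \<otimes>\<^bsub>M\<^esub> g \<in> h <#\<^bsub>M\<^esub> C" using g by (auto simp: l_coset_def)
  then have "Phi (coprod_act p h y) = act (h \<otimes>\<^bsub>M\<^esub> g) (sS i)" using Phi_Cos[OF 3(2) hC] 3 by simp
  also have "\<dots> = act h (act g (sS i))" using act_mult[OF gG assms(2)] by (rule sym)
  also have "\<dots> = act h (Phi y)" using Phi_Cos[OF 3(2,3) g] 3 by simp
  finally show ?thesis .
next
  case (4 i g)
  then show ?thesis using act_mult[OF 4(3) assms(2), of "rF i"] by (simp add: Phi_def)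
qed

theorem main_iso: "\<exists>\<psi>. bij_betw \<psi> X Y \<and> (\<forall>h \<in> G. \<forall>f \<in> X. \<psi> (act h f) = coprod_act p h (\<psi> f))"
proof (intro exI conjI ballI)
  let ?psi = "the_inv_into Y Phi"
  show "bij_betw ?psi X Y" using Phi_bij by (rule bij_betw_the_inv_into)
  fix h f assume h: "h \<in> G" and f: "f \<in> X"
  have y: "?psi f \<in> Y" and Py: "Phi (?psi f) = f"
    using bij_betwE[OF bij_betw_the_inv_into[OF Phi_bij]] f f_the_inv_into_f_bij_betw[OF Phi_bij f]
    by auto
  have "Phi (coprod_act p h (?psi f)) = act h f" using Phi_equiv[OF y h] Py by simp
  then show "?psi (act h f) = coprod_act p h (?psi f)"
    using the_inv_into_f_f[OF Phi_inj coprod_act_Y[OF y h]] by simp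
qed

end

context dihp begin

lemma mkX: assumes "\<And>g. g \<in> G \<Longrightarrow> \<phi> g \<in> {a, b}"
  and "\<And>k s. k < p \<Longrightarrow> \<phi> ((p - k) mod p, \<not> s) = \<phi> (k, s)"
  shows "restrict \<phi> G \<in> X"
  unfolding coind_set_def
proof (intro CollectI conjI ballI)
  show "restrict \<phi> G \<in> G \<rightarrow>\<^sub>E {a, b}" using assms(1) by auto
  fix d g assume d: "d \<in> D2" and g: "g \<in> G"
  have dg: "d \<otimes>\<^bsub>M\<^esub> g \<in> G" using d g D2_sub by blast
  obtain k s where ks: "g = (k, s)" "k < p" using G_elem[OF g] by blast
  have "d = \<one>\<^bsub>M\<^esub> \<or> d = dih_tau" using d by (simp add: D2_eq)
  then show "restrict \<phi> G (d \<otimes>\<^bsub>M\<^esub> g) = restrict \<phi> G g"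
  proof
    assume "d = \<one>\<^bsub>M\<^esub>" then show ?thesis using g by simp
  next
    assume dt: "d = dih_tau"
    have "d \<otimes>\<^bsub>M\<^esub> g = ((p - k) mod p, \<not> s)" using mult_tau_l[OF g] ks dt by simp
    then show ?thesis using dg g assms(2)[OF ks(2), of s] ks by simp
  qed
qed

lemma pmk: "k < p \<Longrightarrow> (p - (p - k) mod p) mod p = k"
proof (cases "k = 0")
  case False
  assume "k < p"
  then have "(p - k) mod p = p - k" using False by simp
  then show ?thesis using \<open>k < p\<close> by simp
qed simp

definition "Fm f = restrict (\<lambda>k. f (k, False)) {0..<p}"
definition "Em u = restrict (\<lambda>(k, s). u (if s then (p - k) mod p else k)) G"

lemma card_X: "card X = 2 ^ p"
proof -
  have bij: "bij_betw Fm X ({0..<p} \<rightarrow>\<^sub>E {a, b})"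
  proof (rule bij_betw_byWitness[where f' = Em])
    show "\<forall>f\<in>X. Em (Fm f) = f"
    proof
      fix f assume f: "f \<in> X"
      show "Em (Fm f) = f"
      proof
        fix g show "Em (Fm f) g = f g"
        proof (cases "g \<in> G")
          case True
          obtain k s where ks: "g = (k, s)" "k < p" using G_elem[OF True] by blast
          show ?thesis
          proof (cases s)
            case True
            then show ?thesis using ks X_tau[OF f ks(2)] p_pos by (simp add: Em_def Fm_def dcarrier)
          next
            case False
            then show ?thesis using ks by (simp add: Em_def Fm_def dcarrier)
          qed
        next
          case False
          then show ?thesis using PiE_arb[OF X_D(1)[OF f] False] by (simp add: Em_def)
        qed
      qed
    qed
    show "\<forall>u\<in>{0..<p} \<rightarrow>\<^sub>E {a, b}. Fm (Em u) = u"
    proof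
      fix u :: "nat \<Rightarrow> 'a" assume u: "u \<in> {0..<p} \<rightarrow>\<^sub>E {a, b}"
      show "Fm (Em u) = u"
      proof
        fix k show "Fm (Em u) k = u k"
          using PiE_arb[OF u, of k] by (cases "k < p") (auto simp: Fm_def Em_def dcarrier)
      qed
    qed
    show "Fm ` X \<subseteq> {0..<p} \<rightarrow>\<^sub>E {a, b}"
    proof
      fix u assume "u \<in> Fm ` X"
      then obtain f where f: "f \<in> X" "u = Fm f" by blast
      have "f (k, False) \<in> {a, b}" if "k < p" for k
        using X_D(1)[OF f(1)] that by (auto simp: dcarrier)
      then show "u \<in> {0..<p} \<rightarrow>\<^sub>E {a, b}" using f(2) by (auto simp: Fm_def)
    qed
    show "Em ` ({0..<p} \<rightarrow>\<^sub>E {a, b}) \<subseteq> X"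
    proof
      fix f assume "f \<in> Em ` ({0..<p} \<rightarrow>\<^sub>E {a, b})"
      then obtain u where u: "u \<in> {0..<p} \<rightarrow>\<^sub>E {a, b}" "f = Em u" by blast
      have "restrict (\<lambda>(k, s). u (if s then (p - k) mod p else k)) G \<in> X"
      proof (rule mkX)
        fix g assume "g \<in> G"
        then obtain k s where ks: "g = (k, s)" "k < p" using G_elem by blast
        have "(p - k) mod p < p" using p_pos by simp
        then show "(\<lambda>(k, s). u (if s then (p - k) mod p else k)) g \<in> {a, b}"
          using u(1) ks by (auto simp: PiE_def Pi_def)
      next
        fix k s assume "k < p"
        then show "(\<lambda>(k, s). u (if s then (p - k) mod p else k)) ((p - k) mod p, \<not> s) =
             (\<lambda>(k, s). u (if s then (p - k) mod p else k)) (k, s)"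
          using pmk by simp
      qed
      then show "f \<in> X" using u(2) by (simp add: Em_def)
    qed
  qed
  have "card ({0..<p} \<rightarrow>\<^sub>E {a, b}) = 2 ^ p" using ab by (simp add: card_PiE numeral_2_eq_2)
  then show ?thesis using bij_betw_same_card[OF bij] by simp
qed

end

context dihp begin

definition "Tfix = {f \<in> X. act dih_tau f = f}"

lemma tfix_eq: assumes "f \<in> Tfix" "k < p" shows "f (k, True) = f (k, False)"
proof -
  have kG: "(k, False) \<in> G" using assms(2) by (simp add: dcarrier)
  have "act dih_tau f (k, False) = f ((k, False) \<otimes>\<^bsub>M\<^esub> dih_tau)" by (rule act_apply[OF kG])
  also have "\<dots> = f (k, True)" using mult_tau_r[OF kG] by simp
  finally show ?thesis using assms(1) by (simp add: Tfix_def)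
qed

definition "qq = (p - 1) div 2"
lemma p_qq: "p = 2 * qq + 1" using od p_pos unfolding qq_def by presburger

definition "F2 f = restrict (\<lambda>k. f (k, False)) {0..<Suc qq}"
definition "E2 v = restrict (\<lambda>(k, s). v (min k (p - k))) G"

lemma min_lt: "k < p \<Longrightarrow> min k (p - k) < Suc qq" using p_qq by simp

lemma min_sym: "k < p \<Longrightarrow> min ((p - k) mod p) (p - (p - k) mod p) = min k (p - k)"
  by (cases "k = 0") auto

lemma card_Tfix: "card Tfix = 2 ^ Suc qq"
proof -
  have bij: "bij_betw F2 Tfix ({0..<Suc qq} \<rightarrow>\<^sub>E {a, b})"
  proof (rule bij_betw_byWitness[where f' = E2])
    show "\<forall>f\<in>Tfix. E2 (F2 f) = f"
    proof
      fix f assume f: "f \<in> Tfix"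
      then have fX: "f \<in> X" by (simp add: Tfix_def)
      show "E2 (F2 f) = f"
      proof
        fix g show "E2 (F2 f) g = f g"
        proof (cases "g \<in> G")
          case True
          obtain k s where ks: "g = (k, s)" "k < p" using G_elem[OF True] by blast
          have fs: "f (k, s) = f (k, False)" using tfix_eq[OF f ks(2)] by (cases s) auto
          have "f (min k (p - k), False) = f (k, False)"
          proof (cases "k \<le> qq")
            case True
            then have "min k (p - k) = k" using p_qq by simp
            then show ?thesis by simp
          next
            case False
            then have m: "min k (p - k) = (p - k) mod p" using p_qq by (simp add: min_def)
            show ?thesis using X_tau[OF fX ks(2)] tfix_eq[OF f ks(2)] m by simp
          qed
          then show ?thesis using ks fs min_lt[OF ks(2)] True by (simp add: E2_def F2_def)
        next
          case False
          then show ?thesis using PiE_arb[OF X_D(1)[OF fX] False] by (simp add: E2_def)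
        qed
      qed
    qed
    show "\<forall>v\<in>{0..<Suc qq} \<rightarrow>\<^sub>E {a, b}. F2 (E2 v) = v"
    proof
      fix v :: "nat \<Rightarrow> 'a" assume v: "v \<in> {0..<Suc qq} \<rightarrow>\<^sub>E {a, b}"
      show "F2 (E2 v) = v"
      proof
        fix k show "F2 (E2 v) k = v k"
        proof (cases "k < Suc qq")
          case True
          then have "k < p" "min k (p - k) = k" using p_qq by auto
          then show ?thesis using True by (simp add: F2_def E2_def dcarrier)
        next
          case False
          then show ?thesis using PiE_arb[OF v, of k] by (simp add: F2_def)
        qed
      qed
    qed
    show "F2 ` Tfix \<subseteq> {0..<Suc qq} \<rightarrow>\<^sub>E {a, b}"
    proof
      fix u assume "u \<in> F2 ` Tfix"
      then obtain f where f: "f \<in> Tfix" "u = F2 f" by blast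
      have "f (k, False) \<in> {a, b}" if "k < Suc qq" for k
        using X_D(1)[of f] f(1) that p_qq by (auto simp: dcarrier Tfix_def)
      then show "u \<in> {0..<Suc qq} \<rightarrow>\<^sub>E {a, b}" using f(2) by (auto simp: F2_def)
    qed
    show "E2 ` ({0..<Suc qq} \<rightarrow>\<^sub>E {a, b}) \<subseteq> Tfix"
    proof
      fix f assume "f \<in> E2 ` ({0..<Suc qq} \<rightarrow>\<^sub>E {a, b})"
      then obtain v where v: "v \<in> {0..<Suc qq} \<rightarrow>\<^sub>E {a, b}" "f = E2 v" by blast
      have fX: "restrict (\<lambda>(k, s). v (min k (p - k))) G \<in> X"
      proof (rule mkX)
        fix g assume "g \<in> G"
        then obtain k s where ks: "g = (k, s)" "k < p" using G_elem by blast
        then show "(\<lambda>(k, s). v (min k (p - k))) g \<in> {a, b}"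
          using v(1) min_lt[OF ks(2)] by (auto simp: PiE_def Pi_def)
      next
        fix k s assume "k < p"
        then show "(\<lambda>(k, s). v (min k (p - k))) ((p - k) mod p, \<not> s) =
             (\<lambda>(k, s). v (min k (p - k))) (k, s)"
          using min_sym by simp
      qed
      have "act dih_tau f = f"
      proof
        fix g show "act dih_tau f g = f g"
        proof (cases "g \<in> G")
          case True
          obtain k s where ks: "g = (k, s)" "k < p" using G_elem[OF True] by blast
          have "act dih_tau f g = f (k, \<not> s)" using act_apply[OF True, of dih_tau f] mult_tau_r[OF True] ks by simp
          then show ?thesis using ks v(2) by (simp add: E2_def dcarrier)
        next
          case False then show ?thesis using act_out[OF False] v(2) by (simp add: E2_def)
        qed
      qed
      then show "f \<in> Tfix" using fX v(2) by (simp add: Tfix_def E2_def)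
    qed
  qed
  have "card ({0..<Suc qq} \<rightarrow>\<^sub>E {a, b}) = 2 ^ Suc qq" using ab by (simp add: card_PiE numeral_2_eq_2)
  then show ?thesis using bij_betw_same_card[OF bij] by simp
qed

lemma finite_X: "finite X" using card_X by (intro card_ge_0_finite) simp

lemma cst_ne': "cst a \<noteq> cst b"
proof
  assume "cst a = cst b"
  then have "cst a \<one>\<^bsub>M\<^esub> = cst b \<one>\<^bsub>M\<^esub>" by simp
  then show False using ab by (simp add: cst_def)
qed

lemma card_S: "card S = 2 ^ ((p + 1) div 2) - 2"
proof -
  have Seq: "S = Tfix - {cst a, cst b}" by (auto simp: S_def Tfix_def)
  have sub: "{cst a, cst b} \<subseteq> Tfix" using cst_X[of a] cst_X[of b] act_cst[OF tau_in, of a] act_cst[OF tau_in, of b] by (simp add: Tfix_def)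
  have fin: "finite Tfix" using finite_X by (simp add: Tfix_def)
  have c2: "card {cst a, cst b} = 2" using cst_ne' by simp
  have "(p + 1) div 2 = Suc qq" using p_qq by simp
  then show ?thesis using Seq card_Diff_subset[OF _ sub] fin c2 card_Tfix
    by (metis finite_subset sub)
qed

end


lemma final_arith:
  fixes p q n :: nat
  assumes pq: "p = 2 * q + 1"
    and eq: "2 ^ p = 2 + (2 ^ (q + 1) - 2) * p + n * (2 * p)"
  shows "n = (2 ^ (p - 1) - 1) div p + 1 - 2 ^ ((p - 1) div 2)"
proof -
  define A :: nat where "A = 2 ^ q"
  have A1: "A \<ge> 1" by (simp add: A_def)
  obtain B where B: "A = B + 1" using A1 by (metis add.commute le_add_diff_inverse)
  have eA: "A * A = 2 ^ (2 * q)" by (simp add: A_def mult_2 power_add)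
  have e1: "2 ^ p = 2 * (A * A)" using pq eA by simp
  have e2: "2 ^ (q + 1) - 2 = 2 * B" using B by (simp add: A_def[symmetric])
  have e3: "2 ^ (p - 1) = A * A" using pq eA by simp
  have e4: "(p - 1) div 2 = q" using pq by simp
  have "2 * (A * A) = 2 + 2 * B * p + n * (2 * p)" using eq e1 e2 by simp
  then have "A * A = 1 + B * p + n * p" by simp
  then have "A * A - 1 = p * (B + n)" by (simp add: algebra_simps)
  moreover have "p > 0" using pq by simp
  ultimately have "(A * A - 1) div p = B + n" by simp
  then show ?thesis using e3 e4 B by (simp add: A_def[symmetric])
qed

context dihp begin

lemma L_eq: "L = (\<lambda>k. {(k, False), (k, True)}) ` {0..<p}"
proof
  show "L \<subseteq> (\<lambda>k. {(k, False), (k, True)}) ` {0..<p}"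
  proof
    fix C assume "C \<in> L"
    then obtain g where g: "g \<in> G" "C = g <#\<^bsub>M\<^esub> D2" by (auto simp: left_cosets_D2_def)
    obtain k s where ks: "g = (k, s)" "k < p" using G_elem[OF g(1)] by blast
    have "C = {(k, s), (k, \<not> s)}" using lcos_eq[OF g(1)] mult_tau_r[OF g(1)] g(2) ks by simp
    then have "C = {(k, False), (k, True)}" by (cases s) auto
    then show "C \<in> (\<lambda>k. {(k, False), (k, True)}) ` {0..<p}" using ks by auto
  qed
  show "(\<lambda>k. {(k, False), (k, True)}) ` {0..<p} \<subseteq> L"
  proof
    fix C assume "C \<in> (\<lambda>k. {(k, False), (k, True)}) ` {0..<p}"
    then obtain k where k: "k < p" "C = {(k, False), (k, True)}" by auto
    have kG: "(k, False) \<in> G" using k by (simp add: dcarrier)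
    have "(k, False) <#\<^bsub>M\<^esub> D2 = C" using lcos_eq[OF kG] mult_tau_r[OF kG] k by auto
    then show "C \<in> L" using coset_in_L[OF kG] by simp
  qed
qed

lemma card_L: "card L = p"
proof -
  have "inj_on (\<lambda>k. {(k, False), (k, True)}) {0..<p}"
  proof (rule inj_onI)
    fix x y assume "{(x, False), (x, True)} = {(y, False), (y, True)}"
    then have "(x, False) \<in> {(y, False), (y, True)}" by blast
    then show "x = y" by simp
  qed
  then show ?thesis using L_eq card_image by fastforce
qed

lemma card_G: "card G = 2 * p" by (simp add: dcarrier card_cartesian_product)

lemma card_Y: "card (coprod_set p N1 N2) = 2 + N1 * p + N2 * (2 * p)"
proof -
  define A where "A = (\<lambda>(i, C). Cos i C) ` ({0..<N1} \<times> L)"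
  define B where "B = (\<lambda>(i, g). Free i g) ` ({0..<N2} \<times> G)"
  have eA: "{Cos i C | i C. i < N1 \<and> C \<in> L} = A"
    unfolding A_def by force
  have eB: "{Free i g | i g. i < N2 \<and> g \<in> G} = B"
    unfolding B_def by force
  have Y: "coprod_set p N1 N2 = {Pt 0, Pt 1} \<union> A \<union> B"
    unfolding coprod_set_def eA eB ..
  have finL: "finite L" using L_eq by simp
  have finG: "finite G" by (simp add: dcarrier)
  have cA: "card A = N1 * p" unfolding A_def
    by (subst card_image) (auto simp: inj_on_def card_cartesian_product card_L)
  have cB: "card B = N2 * (2 * p)" unfolding B_def
    by (subst card_image) (auto simp: inj_on_def card_cartesian_product card_G)
  have fA: "finite A" unfolding A_def using finL by simp
  have fB: "finite B" unfolding B_def using finG by simp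
  have d1: "({Pt 0, Pt 1} \<union> A) \<inter> B = {}" unfolding A_def B_def by force
  have d2: "{Pt 0, Pt 1} \<inter> A = {}" unfolding A_def by force
  have "card ({Pt 0, Pt 1} \<union> A \<union> B) = card ({Pt 0, Pt 1} \<union> A) + card B"
    using d1 fA fB by (intro card_Un_disjoint) auto
  also have "card ({Pt 0, Pt 1} \<union> A) = 2 + card A"
    using d2 fA by (subst card_Un_disjoint) auto
  finally show ?thesis using Y cA cB by simp
qed

end

theorem lemma8p4:
  fixes p :: nat and a b :: 'a
  assumes "prime p" and "odd p" and "a \<noteq> b"
  shows "\<exists>\<psi>. bij_betw \<psi> (coind_set p a b)
              (coprod_set p (2 ^ ((p + 1) div 2) - 2)
                            ((2 ^ (p - 1) - 1) div p + 1 - 2 ^ ((p - 1) div 2)))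
           \<and> (\<forall>h \<in> carrier (dihedral p). \<forall>f \<in> coind_set p a b.
                 \<psi> (coind_act p h f) = coprod_act p h (\<psi> f))"
proof -
  interpret dihp p a b using assms by unfold_locales
  have fS: "finite S" using finite_X by (rule finite_subset[rotated]) (auto simp: S_def)
  have fR: "finite RF" using finite_X by (rule finite_subset[rotated]) (auto simp: RF_def XF_def)
  obtain sS where sS: "bij_betw sS {0..<card S} S" using ex_bij_betw_nat_finite[OF fS] by blast
  obtain rF where rF: "bij_betw rF {0..<card RF} RF" using ex_bij_betw_nat_finite[OF fR] by blast
  interpret D: dihp2 p a b sS rF "card S" "card RF" using sS rF by unfold_locales
  have "card X = card (coprod_set p (card S) (card RF))" using bij_betw_same_card[OF D.Phi_bij] by simp
  then have eq0: "2 ^ p = 2 + card S * p + card RF * (2 * p)"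
    using card_X card_Y by simp
  have h: "(p + 1) div 2 = qq + 1" using p_qq by simp
  have cS: "card S = 2 ^ (qq + 1) - 2" using card_S h by simp
  have eq: "2 ^ p = 2 + (2 ^ (qq + 1) - 2) * p + card RF * (2 * p)"
    using eq0 unfolding cS .
  have N2: "card RF = (2 ^ (p - 1) - 1) div p + 1 - 2 ^ ((p - 1) div 2)"
    by (rule final_arith[OF p_qq eq])
  show ?thesis using D.main_iso unfolding N2 card_S .
qed


end
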